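(* Let $A$ be a $0$-$1$ matrix over a set $\mathcal G$. Under the isomorphism $\tilde R_A\cong C(\tilde\Gamma_A)$, $f\mapsto\hat f$, one has $\mathfrak R_A\cong C_0(\Gamma_A;\mathbb Z)$ and $\tilde{\mathfrak R}_A\cong C(\tilde\Gamma_A;\mathbb Z)$ (the integer-valued continuous functions, vanishing at infinity in the first case).
   Context: $\rho_i(j)=A(i,j)$ (rows of $A$) and $\delta_i=$ indicator of $\{i\}$, functions on $\mathcal G$. $R_A\subset\ell^\infty(\mathcal G)$ is the $C^*$-algebra generated by all $\rho_i,\delta_i$ and $\tilde R_A$ the one generated by these and $\mathbf 1$. $\mathfrak R_A\subset\mathbb Z^{\mathcal G}$ is the ring generated by $\{\delta_i,\rho_i:i\in\mathcal G\}$, and $\tilde{\mathfrak R}_A$ the ring generated by these and $\mathbf 1$. $\tilde{\mathcal G}=\mathcal G\cup\{\star\}$ is the one-point compactification of discrete $\mathcal G$; $c_j(i)=A(i,j)$; $\tilde\Gamma_A$ is the closure of $\{(j,c_j):j\in\mathcal G\}$ in $\tilde{\mathcal G}\times\{0,1\}^{\mathcal G}$ and $\Gamma_A=\tilde\Gamma_A\setminus\{(\star,\mathbf 0)\}$. It is known that, identifying $j$ with $(j,c_j)$, each $f\in\tilde R_A$ has a unique continuous extension $\hat f$ to $\tilde\Gamma_A$, and $f\mapsto\hat f$ is an isomorphism $\tilde R_A\cong C(\tilde\Gamma_A)$ carrying $R_A$ onto $C_0(\Gamma_A)$. *)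

theory Defs
  imports "HOL-Analysis.Analysis"
begin

text \<open>A 0-1 matrix over the index set G (the type 'a) is A :: 'a => 'a => bool.
  The one-point compactification of discrete G is modelled on 'a option,
  with None playing the role of the point at infinity (star).\<close>

definition opt_open :: "'a option set \<Rightarrow> bool" where
  "opt_open U \<longleftrightarrow> (None \<in> U \<longrightarrow> finite (- U))"

lemma istopology_opt_open: "istopology opt_open"
proof -
  have "finite (- \<Union>K)" if "\<forall>U\<in>K. None \<in> U \<longrightarrow> finite (- U)" "None \<in> \<Union>K"
    for K :: "'a option set set"
  proof -
    from that obtain U where U: "U \<in> K" "None \<in> U" by auto
    with that have "finite (- U)" by auto
    moreover have "- \<Union>K \<subseteq> - U" using U by auto
    ultimately show ?thesis by (rule finite_subset[rotated])
  qed
  then show ?thesis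
    unfolding istopology_def opt_open_def by (auto simp: Compl_Int)
qed

definition opt_top :: "'a option topology" where
  "opt_top = topology opt_open"

definition ambient :: "('a option \<times> ('a \<Rightarrow> bool)) topology" where
  "ambient = prod_topology opt_top (product_topology (\<lambda>_. discrete_topology UNIV) UNIV)"

definition col :: "('a \<Rightarrow> 'a \<Rightarrow> bool) \<Rightarrow> 'a \<Rightarrow> 'a \<Rightarrow> bool" where
  "col A j = (\<lambda>i. A i j)"

definition emb :: "('a \<Rightarrow> 'a \<Rightarrow> bool) \<Rightarrow> 'a \<Rightarrow> 'a option \<times> ('a \<Rightarrow> bool)" where
  "emb A j = (Some j, col A j)"

definition star_pt :: "'a option \<times> ('a \<Rightarrow> bool)" where
  "star_pt = (None, (\<lambda>_. False))"

definition GammaT :: "('a \<Rightarrow> 'a \<Rightarrow> bool) \<Rightarrow> ('a option \<times> ('a \<Rightarrow> bool)) set" where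
  "GammaT A = ambient closure_of (range (emb A))"

definition Gamma :: "('a \<Rightarrow> 'a \<Rightarrow> bool) \<Rightarrow> ('a option \<times> ('a \<Rightarrow> bool)) set" where
  "Gamma A = GammaT A - {star_pt}"

definition rho :: "('a \<Rightarrow> 'a \<Rightarrow> bool) \<Rightarrow> 'a \<Rightarrow> 'a \<Rightarrow> int" where
  "rho A i = (\<lambda>j. of_bool (A i j))"

definition delta :: "'a \<Rightarrow> 'a \<Rightarrow> int" where
  "delta i = (\<lambda>j. of_bool (j = i))"

inductive_set ring_gen :: "('a \<Rightarrow> int) set \<Rightarrow> ('a \<Rightarrow> int) set" for S where
  gen: "f \<in> S \<Longrightarrow> f \<in> ring_gen S"
| zero: "(\<lambda>_. 0) \<in> ring_gen S"
| neg: "f \<in> ring_gen S \<Longrightarrow> (\<lambda>x. - f x) \<in> ring_gen S"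
| add: "f \<in> ring_gen S \<Longrightarrow> g \<in> ring_gen S \<Longrightarrow> (\<lambda>x. f x + g x) \<in> ring_gen S"
| mult: "f \<in> ring_gen S \<Longrightarrow> g \<in> ring_gen S \<Longrightarrow> (\<lambda>x. f x * g x) \<in> ring_gen S"

definition ringR :: "('a \<Rightarrow> 'a \<Rightarrow> bool) \<Rightarrow> ('a \<Rightarrow> int) set" where
  "ringR A = ring_gen ({delta i | i. True} \<union> {rho A i | i. True})"

definition ringRT :: "('a \<Rightarrow> 'a \<Rightarrow> bool) \<Rightarrow> ('a \<Rightarrow> int) set" where
  "ringRT A = ring_gen ({delta i | i. True} \<union> {rho A i | i. True} \<union> {(\<lambda>_. 1)})"

definition CZ :: "('a \<Rightarrow> 'a \<Rightarrow> bool) \<Rightarrow> ('a option \<times> ('a \<Rightarrow> bool) \<Rightarrow> int) set" where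
  "CZ A = {g. continuous_map (subtopology ambient (GammaT A)) euclidean g}"

definition C0Z :: "('a \<Rightarrow> 'a \<Rightarrow> bool) \<Rightarrow> ('a option \<times> ('a \<Rightarrow> bool) \<Rightarrow> int) set" where
  "C0Z A = {g. continuous_map (subtopology ambient (Gamma A)) euclidean g \<and>
               (\<forall>e::real. e > 0 \<longrightarrow>
                  compactin (subtopology ambient (Gamma A))
                    {x \<in> Gamma A. e \<le> real_of_int \<bar>g x\<bar>})}"

end

theory Submission
  imports Defs
begin


lemma openin_opt_top: "openin opt_top U \<longleftrightarrow> (None \<in> U \<longrightarrow> finite (- U))"
  unfolding opt_top_def topology_inverse'[OF istopology_opt_open] by (simp add: opt_open_def)

lemma topspace_opt_top[simp]: "topspace opt_top = UNIV"
  using openin_subset[of opt_top UNIV] by (auto simp: openin_opt_top)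

lemma Hausdorff_opt_top: "Hausdorff_space opt_top"
  unfolding Hausdorff_space_def
proof (intro allI impI, elim conjE)
  fix x y :: "'a option" assume "x \<noteq> y"
  show "\<exists>U V. openin opt_top U \<and> openin opt_top V \<and> x \<in> U \<and> y \<in> V \<and> disjnt U V"
  proof (cases x)
    case None
    then obtain b where b: "y = Some b" using \<open>x \<noteq> y\<close> by (cases y) auto
    show ?thesis by (rule exI[of _ "- {Some b}"], rule exI[of _ "{Some b}"])
       (auto simp: openin_opt_top None b disjnt_def)
  next
    case (Some a)
    show ?thesis by (rule exI[of _ "{Some a}"], rule exI[of _ "- {Some a}"])
       (use \<open>x \<noteq> y\<close> in \<open>auto simp: openin_opt_top Some disjnt_def\<close>)
  qed
qed

lemma compact_opt_top: "compact_space opt_top"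
  unfolding compact_space_def compactin_def
proof (intro conjI allI impI)
  fix \<U> :: "'a option set set" assume H: "(\<forall>B\<in>\<U>. openin opt_top B) \<and> topspace opt_top \<subseteq> \<Union> \<U>"
  then obtain U0 where U0: "U0 \<in> \<U>" "None \<in> U0" by auto
  then have fin: "finite (- U0)" using H openin_opt_top by blast
  have "\<forall>x\<in>- U0. \<exists>B\<in>\<U>. x \<in> B" using H by auto
  then obtain h where h: "\<And>x. x \<in> - U0 \<Longrightarrow> h x \<in> \<U> \<and> x \<in> h x" by metis
  show "\<exists>\<F>. finite \<F> \<and> \<F> \<subseteq> \<U> \<and> topspace opt_top \<subseteq> \<Union> \<F>"
    apply (rule exI[of _ "insert U0 (h ` (- U0))"])
    using fin h U0 by auto
qed auto

lemma topspace_ambient[simp]: "topspace ambient = UNIV"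
  unfolding ambient_def by (simp add: PiE_UNIV_domain)

lemma Hausdorff_ambient: "Hausdorff_space ambient"
  unfolding ambient_def
  by (simp add: Hausdorff_space_prod_topology Hausdorff_opt_top Hausdorff_space_product_topology)

lemma compact_ambient: "compact_space ambient"
  unfolding ambient_def
  by (simp add: compact_space_prod_topology compact_opt_top compact_space_product_topology compact_space_discrete_topology)

lemma compact_GammaT: "compactin ambient (GammaT A)"
  unfolding GammaT_def by (simp add: closedin_compact_space compact_ambient)

lemma emb_in_GammaT: "emb A j \<in> GammaT A"
  unfolding GammaT_def by (rule closure_of_subset[THEN subsetD]) auto

lemma emb_in_Gamma: "emb A j \<in> Gamma A"
  using emb_in_GammaT by (auto simp: Gamma_def emb_def star_pt_def)

lemma basic_nbhd:
  assumes "openin ambient W" "(p0, c) \<in> W"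
  shows "\<exists>U I. openin opt_top U \<and> p0 \<in> U \<and> finite I \<and>
           (\<forall>o' c'. o' \<in> U \<and> (\<forall>i\<in>I. c' i = c i) \<longrightarrow> (o', c') \<in> W)"
proof -
  have "openin (prod_topology opt_top (product_topology (\<lambda>_. discrete_topology UNIV) UNIV)) W"
    using assms(1) by (simp add: ambient_def)
  then have "\<exists>U V. openin opt_top U \<and> openin (product_topology (\<lambda>_. discrete_topology UNIV) UNIV) V \<and>
     p0 \<in> U \<and> c \<in> V \<and> U \<times> V \<subseteq> W"
    using assms(2) unfolding openin_prod_topology_alt by simp
  then obtain U V where UV: "openin opt_top U" "openin (product_topology (\<lambda>_. discrete_topology UNIV) UNIV) V"
    "p0 \<in> U" "c \<in> V" "U \<times> V \<subseteq> W"
    by blast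
  have "\<exists>Z. finite {i \<in> UNIV. Z i \<noteq> topspace (discrete_topology (UNIV::bool set))} \<and>
       (\<forall>i \<in> UNIV. openin (discrete_topology UNIV) (Z i)) \<and> c \<in> Pi\<^sub>E UNIV Z \<and> Pi\<^sub>E UNIV Z \<subseteq> V"
    using UV(2,4) unfolding openin_product_topology_alt by simp
  then obtain Z where Z: "finite {i. Z i \<noteq> (UNIV::bool set)}" "c \<in> Pi\<^sub>E UNIV Z" "Pi\<^sub>E UNIV Z \<subseteq> V"
    by auto
  have ZZ: "c' \<in> V" if "\<forall>i\<in>{i. Z i \<noteq> UNIV}. c' i = c i" for c'
  proof -
    have "\<forall>i. c' i \<in> Z i"
    proof
      fix i show "c' i \<in> Z i"
      proof (cases "Z i = UNIV")
        case False
        then have "c' i = c i" using that by blast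
        moreover have "c i \<in> Z i" using Z(2) by (auto simp: PiE_UNIV_domain Pi_iff)
        ultimately show ?thesis by simp
      qed simp
    qed
    then have "c' \<in> Pi\<^sub>E UNIV Z" by (simp add: PiE_UNIV_domain)
    then show ?thesis using Z(3) by blast
  qed
  have "\<forall>o' c'. o' \<in> U \<and> (\<forall>i\<in>{i. Z i \<noteq> UNIV}. c' i = c i) \<longrightarrow> (o', c') \<in> W"
    using UV(5) ZZ by blast
  then show ?thesis using UV(1,3) Z(1) by blast
qed


lemma cont_int_iff:
  "continuous_map X euclidean (f :: _ \<Rightarrow> int) \<longleftrightarrow> (\<forall>n. openin X {x \<in> topspace X. f x = n})"
proof
  assume "continuous_map X euclidean f"
  then show "\<forall>n. openin X {x \<in> topspace X. f x = n}"
    using openin_continuous_map_preimage[of X euclidean f "{_}"] by (simp add: open_discrete)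
next
  assume H: "\<forall>n. openin X {x \<in> topspace X. f x = n}"
  show "continuous_map X euclidean f"
    unfolding continuous_map_def
  proof (intro conjI allI impI)
    fix U :: "int set"
    have "{x \<in> topspace X. f x \<in> U} = (\<Union>n\<in>U. {x \<in> topspace X. f x = n})" by auto
    then show "openin X {x \<in> topspace X. f x \<in> U}" using H by auto
  qed auto
qed

lemma cont_add: "continuous_map X euclidean (f :: _ \<Rightarrow> int) \<Longrightarrow> continuous_map X euclidean g
   \<Longrightarrow> continuous_map X euclidean (\<lambda>x. f x + g x)"
  by (simp add: continuous_map_atin tendsto_add)

lemma cont_mult: "continuous_map X euclidean (f :: _ \<Rightarrow> int) \<Longrightarrow> continuous_map X euclidean g
   \<Longrightarrow> continuous_map X euclidean (\<lambda>x. f x * g x)"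
  by (simp add: continuous_map_atin tendsto_mult)

lemma cont_neg: "continuous_map X euclidean (f :: _ \<Rightarrow> int)
   \<Longrightarrow> continuous_map X euclidean (\<lambda>x. - f x)"
proof -
  assume f: "continuous_map X euclidean f"
  have "continuous_map X euclidean (\<lambda>x. (-1) * f x)"
    by (rule cont_mult[OF _ f]) simp
  then show ?thesis by simp
qed

lemma cont_const: "continuous_map X euclidean (\<lambda>x. (c::int))"
  by simp



lemma cont_of_bool:
  assumes "openin X {x \<in> topspace X. P x}" "openin X {x \<in> topspace X. \<not> P x}"
  shows "continuous_map X euclidean (\<lambda>x. of_bool (P x) :: int)"
  unfolding cont_int_iff
proof
  fix n :: int
  consider "n = 0" | "n = 1" | "n \<noteq> 0 \<and> n \<noteq> 1" by blast
  then show "openin X {x \<in> topspace X. of_bool (P x) = n}"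
  proof cases
    case 1 then have "{x \<in> topspace X. of_bool (P x) = n} = {x \<in> topspace X. \<not> P x}" by auto
    then show ?thesis using assms(2) by (metis (no_types, lifting))
  next
    case 2 then have "{x \<in> topspace X. of_bool (P x) = n} = {x \<in> topspace X. P x}" by auto
    then show ?thesis using assms(1) by (metis (no_types, lifting))
  next
    case 3 then have "{x \<in> topspace X. of_bool (P x) = n} = {}" by (auto simp: of_bool_def split: if_splits)
    then show ?thesis by (metis openin_empty)
  qed
qed

lemma openin_fst_pre: "openin opt_top U \<Longrightarrow> openin ambient {x. fst x \<in> U}"
  unfolding ambient_def using openin_continuous_map_preimage[OF continuous_map_fst[of opt_top "product_topology (\<lambda>_. discrete_topology UNIV) UNIV"], of U]
  by simp

lemma openin_snd_pre: "openin ambient {x. snd x i \<in> B}"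
proof -
  have "continuous_map ambient (discrete_topology UNIV) (\<lambda>x. snd x i)"
    unfolding ambient_def
    by (rule continuous_map_compose[OF continuous_map_snd continuous_map_product_projection, unfolded o_def]) simp
  from openin_continuous_map_preimage[OF this, of B] show ?thesis by simp
qed

definition gdelta :: "'a \<Rightarrow> 'a option \<times> ('a \<Rightarrow> bool) \<Rightarrow> int" where
  "gdelta i = (\<lambda>x. of_bool (fst x = Some i))"

definition grho :: "'a \<Rightarrow> 'a option \<times> ('a \<Rightarrow> bool) \<Rightarrow> int" where
  "grho i = (\<lambda>x. of_bool (snd x i))"

lemma cont_gdelta: "continuous_map ambient euclidean (gdelta i)"
  unfolding gdelta_def
proof (rule cont_of_bool)
  show "openin ambient {x \<in> topspace ambient. fst x = Some i}"
    using openin_fst_pre[of "{Some i}"] by (simp add: openin_opt_top)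
  have "finite (- (- {Some i}))" by simp
  then show "openin ambient {x \<in> topspace ambient. fst x \<noteq> Some i}"
    using openin_fst_pre[of "- {Some i}"] by (simp add: openin_opt_top)
qed

lemma cont_grho: "continuous_map ambient euclidean (grho i)"
  unfolding grho_def
  by (rule cont_of_bool) (use openin_snd_pre[of i "{True}"] openin_snd_pre[of i "{False}"] in simp_all)

lemma gdelta_emb: "gdelta i \<circ> emb A = delta i"
  by (auto simp: gdelta_def emb_def delta_def)

lemma grho_emb: "grho i \<circ> emb A = rho A i"
  by (auto simp: grho_def emb_def rho_def col_def)

lemma gdelta_star: "gdelta i star_pt = 0" by (simp add: gdelta_def star_pt_def)
lemma grho_star: "grho i star_pt = 0" by (simp add: grho_def star_pt_def)

abbreviation "contT A g \<equiv> continuous_map (subtopology ambient (GammaT A)) euclidean (g :: _ \<Rightarrow> int)"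

lemma ring_ext:
  assumes "f \<in> ring_gen S"
    and "\<And>s. s \<in> S \<Longrightarrow> \<exists>g. contT A g \<and> g \<circ> emb A = s \<and> Q (g star_pt)"
    and "Q 0" "\<And>a b. Q a \<Longrightarrow> Q b \<Longrightarrow> Q (a + b)" "\<And>a b. Q a \<Longrightarrow> Q b \<Longrightarrow> Q (a * b)"
    "\<And>a. Q a \<Longrightarrow> Q (- a)"
  shows "\<exists>g. contT A g \<and> g \<circ> emb A = f \<and> Q (g star_pt)"
  using assms(1)
proof induction
  case (gen f) then show ?case using assms(2) by blast
next
  case zero
  have "contT A (\<lambda>_. 0)" by (rule cont_const)
  moreover have "(\<lambda>_. 0) \<circ> emb A = (\<lambda>_. 0)" by (simp add: o_def)
  ultimately show ?case using assms(3) by blast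
next
  case (neg f)
  then obtain g where g: "contT A g" "g \<circ> emb A = f" "Q (g star_pt)" by blast
  have e: "\<And>x. f x = g (emb A x)" using g(2) by auto
  have "contT A (\<lambda>x. - g x)" by (rule cont_neg) fact
  moreover have "(\<lambda>x. - g x) \<circ> emb A = (\<lambda>x. - f x)" by (simp add: o_def e)
  moreover have "Q (- g star_pt)" by (rule assms(6)) fact
  ultimately show ?case by blast
next
  case (add f1 f2)
  then obtain g1 g2 where g: "contT A g1" "g1 \<circ> emb A = f1" "Q (g1 star_pt)"
    "contT A g2" "g2 \<circ> emb A = f2" "Q (g2 star_pt)" by blast
  have e: "\<And>x. f1 x = g1 (emb A x)" "\<And>x. f2 x = g2 (emb A x)" using g(2,5) by auto
  have "contT A (\<lambda>x. g1 x + g2 x)" by (rule cont_add) fact+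
  moreover have "(\<lambda>x. g1 x + g2 x) \<circ> emb A = (\<lambda>x. f1 x + f2 x)" by (simp add: o_def e)
  moreover have "Q (g1 star_pt + g2 star_pt)" by (rule assms(4)) fact+
  ultimately show ?case by blast
next
  case (mult f1 f2)
  then obtain g1 g2 where g: "contT A g1" "g1 \<circ> emb A = f1" "Q (g1 star_pt)"
    "contT A g2" "g2 \<circ> emb A = f2" "Q (g2 star_pt)" by blast
  have e: "\<And>x. f1 x = g1 (emb A x)" "\<And>x. f2 x = g2 (emb A x)" using g(2,5) by auto
  have "contT A (\<lambda>x. g1 x * g2 x)" by (rule cont_mult) fact+
  moreover have "(\<lambda>x. g1 x * g2 x) \<circ> emb A = (\<lambda>x. f1 x * f2 x)" by (simp add: o_def e)
  moreover have "Q (g1 star_pt * g2 star_pt)" by (rule assms(5)) fact+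
  ultimately show ?case by blast
qed

lemma contT_restrict: "continuous_map ambient euclidean g \<Longrightarrow> contT A g"
  by (simp add: continuous_map_from_subtopology)

lemma ringRT_ext: "f \<in> ringRT A \<Longrightarrow> \<exists>g. contT A g \<and> g \<circ> emb A = f"
proof -
  assume f: "f \<in> ringRT A"
  have "\<exists>g. contT A g \<and> g \<circ> emb A = f \<and> (\<lambda>_. True) (g star_pt)"
  proof (rule ring_ext[OF f[unfolded ringRT_def]])
    fix s assume "s \<in> {delta i |i. True} \<union> {rho A i |i. True} \<union> {\<lambda>_. 1}"
    then consider i where "s = delta i" | i where "s = rho A i" | "s = (\<lambda>_. 1)" by blast
    then show "\<exists>g. contT A g \<and> g \<circ> emb A = s \<and> (\<lambda>_. True) (g star_pt)"
    proof cases
      case (1 i)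
      have "contT A (gdelta i)" by (rule contT_restrict[OF cont_gdelta])
      then show ?thesis using 1 by (intro exI[of _ "gdelta i"]) (simp add: gdelta_emb)
    next
      case (2 i)
      have "contT A (grho i)" by (rule contT_restrict[OF cont_grho])
      then show ?thesis using 2 by (intro exI[of _ "grho i"]) (simp add: grho_emb)
    next
      case 3
      have "contT A (\<lambda>_. 1)" by (rule cont_const)
      then show ?thesis using 3 by (intro exI[of _ "\<lambda>_. 1"]) (simp add: o_def)
    qed
  qed simp_all
  then show ?thesis by blast
qed

lemma ringR_ext: "f \<in> ringR A \<Longrightarrow> \<exists>g. contT A g \<and> g \<circ> emb A = f \<and> g star_pt = 0"
proof -
  assume f: "f \<in> ringR A"
  show ?thesis
  proof (rule ring_ext[OF f[unfolded ringR_def], where Q="\<lambda>x. x = 0"])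
    fix s assume "s \<in> {delta i |i. True} \<union> {rho A i |i. True}"
    then consider i where "s = delta i" | i where "s = rho A i" by blast
    then show "\<exists>g. contT A g \<and> g \<circ> emb A = s \<and> g star_pt = 0"
    proof cases
      case (1 i)
      have "contT A (gdelta i)" by (rule contT_restrict[OF cont_gdelta])
      then show ?thesis using 1 by (intro exI[of _ "gdelta i"]) (simp add: gdelta_emb gdelta_star)
    next
      case (2 i)
      have "contT A (grho i)" by (rule contT_restrict[OF cont_grho])
      then show ?thesis using 2 by (intro exI[of _ "grho i"]) (simp add: grho_emb grho_star)
    qed
  qed simp_all
qed



lemma rg_diff: "f \<in> ring_gen S \<Longrightarrow> g \<in> ring_gen S \<Longrightarrow> (\<lambda>x. f x - g x) \<in> ring_gen S"
  using ring_gen.add[OF _ ring_gen.neg, of f S g] by simp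

lemma rg_sum: "finite K \<Longrightarrow> (\<And>k. k \<in> K \<Longrightarrow> f k \<in> ring_gen S) \<Longrightarrow> (\<lambda>x. \<Sum>k\<in>K. f k x) \<in> ring_gen S"
proof (induction K rule: finite_induct)
  case empty then show ?case by (simp add: ring_gen.zero)
next
  case (insert k K)
  then show ?case using ring_gen.add[of "f k" S "\<lambda>x. \<Sum>k\<in>K. f k x"] by simp
qed

lemma rg_prod: assumes one: "(\<lambda>_. 1) \<in> ring_gen S" shows "finite K \<Longrightarrow> (\<And>k. k \<in> K \<Longrightarrow> f k \<in> ring_gen S) \<Longrightarrow> (\<lambda>x. \<Prod>k\<in>K. f k x) \<in> ring_gen S"
proof (induction K rule: finite_induct)
  case empty then show ?case using one by simp
next
  case (insert k K)
  then show ?case using ring_gen.mult[of "f k" S "\<lambda>x. \<Prod>k\<in>K. f k x"] by simp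
qed

lemma rg_nat: "(\<lambda>_. 1) \<in> ring_gen S \<Longrightarrow> (\<lambda>_. int n) \<in> ring_gen S"
proof (induction n)
  case 0 then show ?case by (simp add: ring_gen.zero)
next
  case (Suc n) then show ?case using ring_gen.add[of "\<lambda>_. 1" S "\<lambda>_. int n"] by (simp add: add.commute)
qed

lemma rg_const: "(\<lambda>_. 1) \<in> ring_gen S \<Longrightarrow> (\<lambda>_. c::int) \<in> ring_gen S"
proof (cases "c \<ge> 0")
  case True
  assume "(\<lambda>_. 1) \<in> ring_gen S"
  from rg_nat[OF this, of "nat c"] True show ?thesis by simp
next
  case False
  assume "(\<lambda>_. 1) \<in> ring_gen S"
  from ring_gen.neg[OF rg_nat[OF this, of "nat (- c)"]] False show ?thesis by simp
qed

lemma one_RT: "(\<lambda>_. 1) \<in> ringRT A"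
  unfolding ringRT_def by (rule ring_gen.gen) simp

lemma delta_RT: "delta i \<in> ringRT A"
  unfolding ringRT_def by (rule ring_gen.gen) blast

lemma rho_RT: "rho A i \<in> ringRT A"
  unfolding ringRT_def by (rule ring_gen.gen) blast

lemma delta_R: "delta i \<in> ringR A"
  unfolding ringR_def by (rule ring_gen.gen) blast

lemma rho_R: "rho A i \<in> ringR A"
  unfolding ringR_def by (rule ring_gen.gen) blast

lemma RT_add: "f \<in> ringRT A \<Longrightarrow> g \<in> ringRT A \<Longrightarrow> (\<lambda>x. f x + g x) \<in> ringRT A"
  unfolding ringRT_def by (rule ring_gen.add)
lemma RT_mult: "f \<in> ringRT A \<Longrightarrow> g \<in> ringRT A \<Longrightarrow> (\<lambda>x. f x * g x) \<in> ringRT A"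
  unfolding ringRT_def by (rule ring_gen.mult)
lemma RT_diff: "f \<in> ringRT A \<Longrightarrow> g \<in> ringRT A \<Longrightarrow> (\<lambda>x. f x - g x) \<in> ringRT A"
  unfolding ringRT_def by (rule rg_diff)
lemma RT_const: "(\<lambda>_. c) \<in> ringRT A"
  using one_RT unfolding ringRT_def by (rule rg_const)
lemma RT_one_minus: "g \<in> ringRT A \<Longrightarrow> (\<lambda>x. 1 - g x) \<in> ringRT A"
  using RT_diff[OF one_RT] by blast

lemma finset_RT: "finite W \<Longrightarrow> (\<lambda>j. of_bool (j \<in> W)) \<in> ringRT A"
proof -
  assume W: "finite W"
  have "(\<lambda>x. \<Sum>k\<in>W. delta k x) \<in> ringRT A"
    unfolding ringRT_def by (rule rg_sum[OF W delta_RT[unfolded ringRT_def]])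
  moreover have "(\<lambda>x. \<Sum>k\<in>W. delta k x) = (\<lambda>j. of_bool (j \<in> W))"
    using W by (auto simp: delta_def fun_eq_iff)
  ultimately show ?thesis by simp
qed

lemma trace_RT:
  assumes "finite W \<or> finite (- W)" "finite I"
  shows "(\<lambda>j. of_bool (j \<in> W \<and> (\<forall>i\<in>I. A i j = b i))) \<in> ringRT A"
proof -
  have chiW: "(\<lambda>j. of_bool (j \<in> W)) \<in> ringRT A"
  proof (cases "finite W")
    case True then show ?thesis by (rule finset_RT)
  next
    case False
    then have "finite (- W)" using assms(1) by blast
    from RT_one_minus[OF finset_RT[OF this]]
    have "(\<lambda>x. 1 - of_bool (x \<in> - W)) \<in> ringRT A" .
    moreover have "(\<lambda>x. 1 - of_bool (x \<in> - W) :: int) = (\<lambda>j. of_bool (j \<in> W))" by (auto simp: fun_eq_iff)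
    ultimately show ?thesis by simp
  qed
  define q where "q i = (if b i then rho A i else (\<lambda>x. 1 - rho A i x))" for i
  have q: "q i \<in> ringRT A" for i
  proof (cases "b i")
    case True then show ?thesis unfolding q_def using rho_RT[of A i] by simp
  next
    case False then show ?thesis unfolding q_def using RT_one_minus[OF rho_RT[of A i]] by simp
  qed
  have P: "(\<lambda>x. \<Prod>i\<in>I. q i x) \<in> ringRT A"
    unfolding ringRT_def by (rule rg_prod[OF one_RT[unfolded ringRT_def] assms(2) q[unfolded ringRT_def]])
  have qv: "q i j = of_bool (A i j = b i)" for i j by (auto simp: q_def rho_def)
  have Pv: "(\<Prod>i\<in>I. q i x) = of_bool (\<forall>i\<in>I. A i x = b i)" for x
    using assms(2) by (induction I rule: finite_induct) (auto simp: qv)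
  have "(\<lambda>x. of_bool (x \<in> W) * (\<Prod>i\<in>I. q i x)) \<in> ringRT A"
    by (rule RT_mult[OF chiW P])
  then show ?thesis by (simp add: Pv of_bool_conj)
qed

lemma combine:
  assumes "finite P" "\<And>p. p \<in> P \<Longrightarrow> (\<lambda>j. of_bool (j \<in> T p)) \<in> ringRT A"
    "\<And>p j. p \<in> P \<Longrightarrow> j \<in> T p \<Longrightarrow> f j = v p"
  shows "\<exists>h\<in>ringRT A. \<forall>j\<in>\<Union>(T ` P). h j = f j"
  using assms
proof (induction P rule: finite_induct)
  case empty
  show ?case by (rule bexI[OF _ one_RT]) simp
next
  case (insert q P)
  have p1: "\<And>p. p \<in> P \<Longrightarrow> (\<lambda>j. of_bool (j \<in> T p)) \<in> ringRT A"
    by (rule insert.prems(1)) simp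
  have p2: "\<And>p j. p \<in> P \<Longrightarrow> j \<in> T p \<Longrightarrow> f j = v p"
    by (rule insert.prems(2)) simp_all
  obtain h where h: "h \<in> ringRT A" "\<forall>j\<in>\<Union>(T ` P). h j = f j"
    using insert.IH[OF p1 p2] by blast
  define t where "t = (\<lambda>j. of_bool (j \<in> T q) :: int)"
  have t: "t \<in> ringRT A" unfolding t_def by (rule insert.prems(1)) simp
  have mem: "(\<lambda>j. t j * v q + (1 - t j) * h j) \<in> ringRT A"
    by (rule RT_add[OF RT_mult[OF t RT_const] RT_mult[OF RT_one_minus[OF t] h(1)]])
  have vq: "\<And>j. j \<in> T q \<Longrightarrow> f j = v q" by (rule insert.prems(2)) simp_all
  have all: "\<forall>j\<in>\<Union>(T ` insert q P). t j * v q + (1 - t j) * h j = f j"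
  proof
    fix j assume j: "j \<in> \<Union>(T ` insert q P)"
    show "t j * v q + (1 - t j) * h j = f j"
    proof (cases "j \<in> T q")
      case True then show ?thesis using vq[OF True] by (simp add: t_def)
    next
      case False
      then have "j \<in> \<Union>(T ` P)" using j by blast
      then have "h j = f j" using h(2) by blast
      then show ?thesis using False by (simp add: t_def)
    qed
  qed
  show ?case using all by (intro bexI[OF _ mem]) simp
qed



lemma topspace_subGT: "topspace (subtopology ambient (GammaT A)) = GammaT A"
  by simp

lemma local_const:
  assumes g: "g \<in> CZ A" and p: "p \<in> GammaT A"
  shows "\<exists>U I. fst p \<in> U \<and> openin opt_top U \<and> finite I \<and>
     (finite {j. Some j \<in> U} \<or> finite (- {j. Some j \<in> U})) \<and>
     (\<forall>x\<in>GammaT A. fst x \<in> U \<and> (\<forall>i\<in>I. snd x i = snd p i) \<longrightarrow> g x = g p)"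
proof -
  have "openin (subtopology ambient (GammaT A)) {x \<in> topspace (subtopology ambient (GammaT A)). g x = g p}"
    using g unfolding CZ_def cont_int_iff by blast
  then have "openin (subtopology ambient (GammaT A)) {x \<in> GammaT A. g x = g p}" by simp
  then obtain W where W: "openin ambient W" "{x \<in> GammaT A. g x = g p} = W \<inter> GammaT A"
    unfolding openin_subtopology by blast
  have pW: "(fst p, snd p) \<in> W" using W(2) p by auto
  obtain U0 I where U0: "openin opt_top U0" "fst p \<in> U0" "finite I"
     "\<forall>o' c'. o' \<in> U0 \<and> (\<forall>i\<in>I. c' i = snd p i) \<longrightarrow> (o', c') \<in> W"
    using basic_nbhd[OF W(1) pW] by blast
  have gx: "g x = g p" if "x \<in> GammaT A" "fst x \<in> U0" "\<forall>i\<in>I. snd x i = snd p i" for x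
  proof -
    have "(fst x, snd x) \<in> W" using U0(4) that(2,3) by blast
    then have "x \<in> W" by simp
    then show ?thesis using W(2) that(1) by blast
  qed
  show ?thesis
  proof (cases "fst p")
    case None
    then have "finite (- U0)" using U0(1,2) unfolding openin_opt_top by simp
    then have "finite (Some -` (- U0))" by (rule finite_vimageI) simp
    moreover have "Some -` (- U0) = - {j. Some j \<in> U0}" by auto
    ultimately have fin: "finite (- {j. Some j \<in> U0})" by simp
    have "\<forall>x\<in>GammaT A. fst x \<in> U0 \<and> (\<forall>i\<in>I. snd x i = snd p i) \<longrightarrow> g x = g p"
      using gx by simp
    then show ?thesis
      by (intro exI[of _ U0] exI[of _ I] conjI U0(1,2,3) disjI2[OF fin])
  next
    case (Some j0)
    define U where "U = U0 \<inter> {Some j0}"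
    have oU: "openin opt_top U" unfolding U_def openin_opt_top by simp
    have fU: "finite {j. Some j \<in> U}"
      by (rule finite_subset[of _ "{j0}"]) (auto simp: U_def)
    have pU: "fst p \<in> U" using Some U0(2) by (simp add: U_def)
    have "\<forall>x\<in>GammaT A. fst x \<in> U \<and> (\<forall>i\<in>I. snd x i = snd p i) \<longrightarrow> g x = g p"
      proof (intro ballI impI)
      fix x assume "x \<in> GammaT A" "fst x \<in> U \<and> (\<forall>i\<in>I. snd x i = snd p i)"
      then show "g x = g p" unfolding U_def by (intro gx) auto
    qed
    then show ?thesis
      by (intro exI[of _ U] exI[of _ I] conjI oU pU U0(3) disjI1[OF fU])
  qed
qed

lemma cyl_open:
  assumes "openin opt_top U" "finite I"
  shows "openin ambient {x. fst x \<in> U \<and> (\<forall>i\<in>I. snd x i = b i)}"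
  using assms(2)
proof (induction I rule: finite_induct)
  case empty then show ?case using openin_fst_pre[OF assms(1)] by simp
next
  case (insert i I)
  have "{x. fst x \<in> U \<and> (\<forall>i\<in>insert i I. snd x i = b i)} =
        {x. fst x \<in> U \<and> (\<forall>i\<in>I. snd x i = b i)} \<inter> {x. snd x i \<in> {b i}}" by auto
  then show ?case using openin_Int[OF insert.IH openin_snd_pre[of i "{b i}"]] by simp
qed

lemma CZ_sub: "g \<in> CZ A \<Longrightarrow> g \<circ> emb A \<in> ringRT A"
proof -
  assume g: "g \<in> CZ A"
  define LC where "LC p U I \<longleftrightarrow> fst p \<in> U \<and> openin opt_top U \<and> finite I \<and>
     (finite {j. Some j \<in> U} \<or> finite (- {j. Some j \<in> U})) \<and>
     (\<forall>x\<in>GammaT A. fst x \<in> U \<and> (\<forall>i\<in>I. snd x i = snd p i) \<longrightarrow> g x = g p)" for p U I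
  define UU where "UU p = (SOME U. \<exists>I. LC p U I)" for p
  define II where "II p = (SOME I. LC p (UU p) I)" for p
  have LCp: "LC p (UU p) (II p)" if p: "p \<in> GammaT A" for p
  proof -
    have ex: "\<exists>U I. LC p U I" unfolding LC_def by (rule local_const[OF g p])
    have "\<exists>I. LC p (UU p) I" unfolding UU_def using someI_ex[of "\<lambda>U. \<exists>I. LC p U I", OF ex] .
    then show ?thesis unfolding II_def using someI_ex[of "\<lambda>I. LC p (UU p) I"] by blast
  qed
  have H: "fst p \<in> UU p \<and> openin opt_top (UU p) \<and> finite (II p) \<and>
     (finite {j. Some j \<in> UU p} \<or> finite (- {j. Some j \<in> UU p})) \<and>
     (\<forall>x\<in>GammaT A. fst x \<in> UU p \<and> (\<forall>i\<in>II p. snd x i = snd p i) \<longrightarrow> g x = g p)"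
    if "p \<in> GammaT A" for p
    using LCp[OF that] unfolding LC_def .
  have H1: "fst p \<in> UU p" and H2: "openin opt_top (UU p)" and H3: "finite (II p)"
    and H4: "finite {j. Some j \<in> UU p} \<or> finite (- {j. Some j \<in> UU p})"
    and H5: "\<And>x. x \<in> GammaT A \<Longrightarrow> fst x \<in> UU p \<Longrightarrow> (\<forall>i\<in>II p. snd x i = snd p i) \<Longrightarrow> g x = g p"
    if "p \<in> GammaT A" for p
    using H[OF that] by blast+
  define N where "N p = {x. fst x \<in> UU p \<and> (\<forall>i\<in>II p. snd x i = snd p i)}" for p
  have Nopen: "openin ambient (N p)" if "p \<in> GammaT A" for p
    unfolding N_def by (rule cyl_open[OF H2[OF that] H3[OF that]])
  have pN: "p \<in> N p" if "p \<in> GammaT A" for p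
    unfolding N_def using H1[OF that] by simp
  have cov: "(\<forall>B\<in>N ` GammaT A. openin ambient B) \<and> GammaT A \<subseteq> \<Union>(N ` GammaT A)"
    using pN Nopen by blast
  have C: "\<forall>\<U>. (\<forall>B\<in>\<U>. openin ambient B) \<and> GammaT A \<subseteq> \<Union>\<U> \<longrightarrow> (\<exists>F. finite F \<and> F \<subseteq> \<U> \<and> GammaT A \<subseteq> \<Union>F)"
    using compact_GammaT[of A] unfolding compactin_def by blast
  obtain F where F: "finite F" "F \<subseteq> N ` GammaT A" "GammaT A \<subseteq> \<Union>F"
    using C[rule_format, OF cov] by blast
  obtain P where P: "P \<subseteq> GammaT A" "finite P" "F = N ` P"
    using finite_subset_image[OF F(1,2)] by blast
  define T where "T p = {j. emb A j \<in> N p}" for p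
  have Teq: "(\<lambda>j. of_bool (j \<in> T p)) = (\<lambda>j. of_bool (j \<in> {j. Some j \<in> UU p} \<and> (\<forall>i\<in>II p. A i j = snd p i)))" for p
    by (auto simp: T_def N_def emb_def col_def fun_eq_iff)
  have "\<exists>h\<in>ringRT A. \<forall>j\<in>\<Union>(T ` P). h j = (g \<circ> emb A) j"
  proof (rule combine[OF P(2), where v = g])
    fix p assume p: "p \<in> P"
    then have pG: "p \<in> GammaT A" using P(1) by blast
    show "(\<lambda>j. of_bool (j \<in> T p)) \<in> ringRT A"
      unfolding Teq by (rule trace_RT[OF H4[OF pG] H3[OF pG]])
    fix j assume "j \<in> T p"
    then have "fst (emb A j) \<in> UU p" "\<forall>i\<in>II p. snd (emb A j) i = snd p i"
      by (simp_all add: T_def N_def)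
    from H5[OF pG emb_in_GammaT this]
    show "(g \<circ> emb A) j = g p" by simp
  qed
  then obtain h where h: "h \<in> ringRT A" "\<forall>j\<in>\<Union>(T ` P). h j = (g \<circ> emb A) j" by blast
  have "j \<in> \<Union>(T ` P)" for j
  proof -
    have "emb A j \<in> \<Union>(N ` P)" using emb_in_GammaT[of A j] F(3) P(3) by blast
    then show ?thesis by (simp add: T_def)
  qed
  then have "\<And>j. h j = (g \<circ> emb A) j" using h(2) by blast
  then have "h = g \<circ> emb A" by (rule ext)
  then show ?thesis using h(1) by simp
qed



lemma closedin_int: "closedin euclidean (C :: int set)"
  by (simp add: closed_def open_discrete)

lemma contT_C0Z:
  assumes g: "contT A g" and g0: "g star_pt = 0"
  shows "g \<in> C0Z A"
proof -
  have sub: "subtopology (subtopology ambient (GammaT A)) (Gamma A) = subtopology ambient (Gamma A)"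
    by (simp add: subtopology_subtopology Gamma_def Int_absorb1 Diff_subset)
  have c1: "continuous_map (subtopology ambient (Gamma A)) euclidean g"
    using continuous_map_from_subtopology[OF g, of "Gamma A"] unfolding sub .
  have cs: "compact_space (subtopology ambient (GammaT A))"
    by (rule compact_space_subtopology[OF compact_GammaT])
  have K: "compactin (subtopology ambient (Gamma A)) {x \<in> Gamma A. e \<le> real_of_int \<bar>g x\<bar>}"
    if e: "e > 0" for e :: real
  proof -
    define K where "K = {x \<in> Gamma A. e \<le> real_of_int \<bar>g x\<bar>}"
    have Keq: "K = {x \<in> topspace (subtopology ambient (GammaT A)). g x \<in> {n. e \<le> real_of_int \<bar>n\<bar>}}"
      using e g0 by (auto simp: K_def Gamma_def)
    have "closedin (subtopology ambient (GammaT A)) K"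
      unfolding Keq by (rule closedin_continuous_map_preimage[OF g closedin_int])
    then have "compactin (subtopology ambient (GammaT A)) K"
      by (rule closedin_compact_space[OF cs])
    then have "compactin ambient K" by (simp add: compactin_subtopology)
    moreover have "K \<subseteq> Gamma A" by (auto simp: K_def)
    ultimately show ?thesis unfolding K_def[symmetric] by (simp add: compactin_subtopology)
  qed
  show ?thesis unfolding C0Z_def using c1 K by blast
qed

lemma C0Z_ext:
  assumes g: "g \<in> C0Z A"
  shows "(\<lambda>x. if x = star_pt then 0 else g x) \<in> CZ A"
proof -
  define g' where "g' = (\<lambda>x. if x = star_pt then 0 else g x)"
  have gc: "continuous_map (subtopology ambient (Gamma A)) euclidean g"
    and gk: "compactin (subtopology ambient (Gamma A)) {x \<in> Gamma A. 1 \<le> real_of_int \<bar>g x\<bar>}"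
    using g unfolding C0Z_def by auto
  have cstar: "closedin ambient {star_pt}"
    by (rule closedin_Hausdorff_singleton[OF Hausdorff_ambient]) simp
  have ostar: "openin ambient (UNIV - {star_pt})"
    using openin_diff[OF openin_topspace cstar] by simp
  have "openin (subtopology ambient (GammaT A)) {x \<in> GammaT A. g' x = n}" for n
  proof (cases "n = 0")
    case False
    have "openin (subtopology ambient (Gamma A)) {x \<in> topspace (subtopology ambient (Gamma A)). g x = n}"
      using gc unfolding cont_int_iff by blast
    then have "openin (subtopology ambient (Gamma A)) {x \<in> Gamma A. g x = n}" by simp
    then obtain W where W: "openin ambient W" "{x \<in> Gamma A. g x = n} = W \<inter> Gamma A"
      unfolding openin_subtopology by blast
    have "{x \<in> GammaT A. g' x = n} = (W \<inter> (UNIV - {star_pt})) \<inter> GammaT A"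
      using W(2) False by (auto simp: g'_def Gamma_def)
    then show ?thesis unfolding openin_subtopology using openin_Int[OF W(1) ostar] by blast
  next
    case True
    define K where "K = {x \<in> Gamma A. 1 \<le> real_of_int \<bar>g x\<bar>}"
    have "compactin ambient K" using gk unfolding K_def by (simp add: compactin_subtopology)
    then have "closedin ambient K" by (rule compactin_imp_closedin[OF Hausdorff_ambient])
    then have oK: "openin ambient (UNIV - K)" using openin_diff[OF openin_topspace, of ambient K] by simp
    have "{x \<in> GammaT A. g' x = n} = (UNIV - K) \<inter> GammaT A"
      using True by (auto simp: g'_def Gamma_def K_def)
    then show ?thesis unfolding openin_subtopology using oK by blast
  qed
  then have "continuous_map (subtopology ambient (GammaT A)) euclidean g'"
    unfolding cont_int_iff by simp
  then show ?thesis unfolding CZ_def g'_def by simp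
qed

lemma rg_smult: "r \<in> ring_gen S \<Longrightarrow> (\<lambda>x. of_int c * r x) \<in> ring_gen S"
proof -
  assume r: "r \<in> ring_gen S"
  have nat: "(\<lambda>x. int n * r x) \<in> ring_gen S" for n
  proof (induction n)
    case 0 then show ?case by (simp add: ring_gen.zero)
  next
    case (Suc n)
    from ring_gen.add[OF r Suc] show ?case by (simp add: algebra_simps)
  qed
  show ?thesis
  proof (cases "c \<ge> 0")
    case True then show ?thesis using nat[of "nat c"] by simp
  next
    case False
    from ring_gen.neg[OF nat[of "nat (- c)"]] False show ?thesis by simp
  qed
qed

lemma R_add: "f \<in> ringR A \<Longrightarrow> g \<in> ringR A \<Longrightarrow> (\<lambda>x. f x + g x) \<in> ringR A"
  unfolding ringR_def by (rule ring_gen.add)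
lemma R_mult: "f \<in> ringR A \<Longrightarrow> g \<in> ringR A \<Longrightarrow> (\<lambda>x. f x * g x) \<in> ringR A"
  unfolding ringR_def by (rule ring_gen.mult)
lemma R_neg: "f \<in> ringR A \<Longrightarrow> (\<lambda>x. - f x) \<in> ringR A"
  unfolding ringR_def by (rule ring_gen.neg)
lemma R_diff: "f \<in> ringR A \<Longrightarrow> g \<in> ringR A \<Longrightarrow> (\<lambda>x. f x - g x) \<in> ringR A"
  unfolding ringR_def by (rule rg_diff)
lemma R_zero: "(\<lambda>_. 0) \<in> ringR A"
  unfolding ringR_def by (rule ring_gen.zero)
lemma R_smult: "f \<in> ringR A \<Longrightarrow> (\<lambda>x. of_int c * f x) \<in> ringR A"
  unfolding ringR_def by (rule rg_smult)

lemma decomp: "f \<in> ringRT A \<Longrightarrow> \<exists>n r. r \<in> ringR A \<and> f = (\<lambda>x. n + r x)"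
  unfolding ringRT_def
proof (induction f rule: ring_gen.induct)
  case (gen f)
  then consider i where "f = delta i" | i where "f = rho A i" | "f = (\<lambda>_. 1)" by blast
  then show ?case
  proof cases
    case (1 i)
    have "f = (\<lambda>x. 0 + delta i x)" using 1 by simp
    then show ?thesis by (intro exI[of _ 0] exI[of _ "delta i"] conjI delta_R)
  next
    case (2 i)
    have "f = (\<lambda>x. 0 + rho A i x)" using 2 by simp
    then show ?thesis by (intro exI[of _ 0] exI[of _ "rho A i"] conjI rho_R)
  next
    case 3
    have "f = (\<lambda>x. 1 + (\<lambda>_. 0) x)" using 3 by simp
    then show ?thesis by (intro exI[of _ 1] exI[of _ "\<lambda>_. 0"] conjI R_zero)
  qed
next
  case zero
  have "(\<lambda>_. 0::int) = (\<lambda>x. 0 + (\<lambda>_. 0) x)" by simp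
  then show ?case by (intro exI[of _ 0] exI[of _ "\<lambda>_. 0"] conjI R_zero)
next
  case (neg f)
  then obtain n r where nr: "r \<in> ringR A" "f = (\<lambda>x. n + r x)" by blast
  have "(\<lambda>x. - f x) = (\<lambda>x. - n + (- r x))" using nr(2) by simp
  then show ?case by (intro exI[of _ "- n"] exI[of _ "\<lambda>x. - r x"] conjI R_neg[OF nr(1)])
next
  case (add f g)
  then obtain n r m s where rs: "r \<in> ringR A" "f = (\<lambda>x. n + r x)" "s \<in> ringR A" "g = (\<lambda>x. m + s x)" by blast
  have "(\<lambda>x. f x + g x) = (\<lambda>x. (n + m) + (r x + s x))" using rs(2,4) by (simp add: fun_eq_iff algebra_simps)
  then show ?case by (intro exI[of _ "n + m"] exI[of _ "\<lambda>x. r x + s x"] conjI R_add[OF rs(1,3)])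
next
  case (mult f g)
  then obtain n r m s where rs: "r \<in> ringR A" "f = (\<lambda>x. n + r x)" "s \<in> ringR A" "g = (\<lambda>x. m + s x)" by blast
  have mem: "(\<lambda>x. (of_int n * s x + of_int m * r x) + r x * s x) \<in> ringR A"
    by (rule R_add[OF R_add[OF R_smult[OF rs(3)] R_smult[OF rs(1)]] R_mult[OF rs(1,3)]])
  have "(\<lambda>x. f x * g x) = (\<lambda>x. n * m + ((of_int n * s x + of_int m * r x) + r x * s x))"
    using rs(2,4) by (simp add: fun_eq_iff algebra_simps)
  then show ?case by (intro exI[of _ "n * m"] exI[of _ "\<lambda>x. (of_int n * s x + of_int m * r x) + r x * s x"] conjI mem)
qed

lemma or_R: "finite I \<Longrightarrow> (\<lambda>j. of_bool (\<exists>i\<in>I. A i j)) \<in> ringR A"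
proof (induction I rule: finite_induct)
  case empty then show ?case by (simp add: ringR_def ring_gen.zero)
next
  case (insert i I)
  have "(\<lambda>j. (rho A i j + of_bool (\<exists>i\<in>I. A i j)) - rho A i j * of_bool (\<exists>i\<in>I. A i j)) \<in> ringR A"
    by (rule R_diff[OF R_add[OF rho_R insert.IH] R_mult[OF rho_R insert.IH]])
  moreover have "(\<lambda>j. (rho A i j + of_bool (\<exists>i\<in>I. A i j)) - rho A i j * of_bool (\<exists>i\<in>I. A i j))
     = (\<lambda>j. of_bool (\<exists>i\<in>insert i I. A i j))"
    by (auto simp: rho_def fun_eq_iff)
  ultimately show ?case by simp
qed

lemma one_R:
  assumes "star_pt \<notin> GammaT A"
  shows "(\<lambda>_. 1) \<in> ringR A"
proof -
  have "\<exists>T. star_pt \<in> T \<and> openin ambient T \<and> (\<forall>j. emb A j \<notin> T)"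
  proof -
    have "\<not> (\<forall>T. star_pt \<in> T \<and> openin ambient T \<longrightarrow> (\<exists>y. y \<in> range (emb A) \<and> y \<in> T))"
      using assms unfolding GammaT_def in_closure_of by simp
    then obtain T where "star_pt \<in> T" "openin ambient T" "\<not> (\<exists>y. y \<in> range (emb A) \<and> y \<in> T)"
      by blast
    then show ?thesis by (intro exI[of _ T]) auto
  qed
  then obtain T where T: "star_pt \<in> T" "openin ambient T" "\<And>j. emb A j \<notin> T" by blast
  have nT: "(None, \<lambda>_. False) \<in> T" using T(1) by (simp add: star_pt_def)
  obtain U I where UI: "openin opt_top U" "None \<in> U" "finite I"
    "\<forall>o' c'. o' \<in> U \<and> (\<forall>i\<in>I. c' i = False) \<longrightarrow> (o', c') \<in> T"
    using basic_nbhd[OF T(2) nT] by blast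
  define F where "F = {j. Some j \<notin> U}"
  have "finite (- U)" using UI(1,2) unfolding openin_opt_top by simp
  then have "finite (Some -` (- U))" by (rule finite_vimageI) simp
  moreover have "Some -` (- U) = F" by (auto simp: F_def)
  ultimately have fF: "finite F" by simp
  have cov: "\<exists>i\<in>I. A i j" if "j \<notin> F" for j
  proof (rule ccontr)
    assume "\<not> (\<exists>i\<in>I. A i j)"
    then have "\<forall>i\<in>I. col A j i = False" by (simp add: col_def)
    moreover have "Some j \<in> U" using that by (simp add: F_def)
    ultimately show False using UI(4)[rule_format, of "Some j" "col A j"] T(3)[of j] by (simp add: emb_def)
  qed
  define q where "q = (\<lambda>j. of_bool (\<exists>i\<in>I. A i j) :: int)"
  define d where "d = (\<lambda>j. \<Sum>k\<in>F. delta k j)"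
  have q: "q \<in> ringR A" unfolding q_def by (rule or_R[OF UI(3)])
  have d: "d \<in> ringR A" unfolding d_def ringR_def
    by (rule rg_sum[OF fF]) (rule delta_R[unfolded ringR_def])
  have deq: "d = (\<lambda>j. of_bool (j \<in> F))"
    using fF by (auto simp: d_def delta_def fun_eq_iff)
  have dv: "d j = of_bool (j \<in> F)" for j by (simp add: deq)
  have "(\<lambda>j. (q j + d j) - q j * d j) \<in> ringR A"
    by (rule R_diff[OF R_add[OF q d] R_mult[OF q d]])
  moreover have "(\<lambda>j. (q j + d j) - q j * d j) = (\<lambda>_. 1)"
  proof
    fix j show "(q j + d j) - q j * d j = 1"
    proof (cases "j \<in> F")
      case True then show ?thesis by (simp add: dv)
    next
      case False then show ?thesis using cov[OF False] by (simp add: dv q_def)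
    qed
  qed
  ultimately show ?thesis by simp
qed

lemma density:
  assumes h: "contT A h" and z: "\<And>j. h (emb A j) = 0" and x: "x \<in> GammaT A"
  shows "h x = 0"
proof -
  have "closedin (subtopology ambient (GammaT A)) {x \<in> topspace (subtopology ambient (GammaT A)). h x \<in> {0}}"
    by (rule closedin_continuous_map_preimage[OF h closedin_int])
  then obtain C where C: "closedin ambient C" "{x \<in> GammaT A. h x \<in> {0}} = C \<inter> GammaT A"
    unfolding closedin_subtopology by auto
  have "range (emb A) \<subseteq> C"
  proof
    fix y assume "y \<in> range (emb A)"
    then obtain j where j: "y = emb A j" by blast
    have "emb A j \<in> {x \<in> GammaT A. h x \<in> {0}}" using z[of j] emb_in_GammaT[of A j] by simp
    then show "y \<in> C" unfolding C(2) j by simp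
  qed
  then have "GammaT A \<subseteq> C" unfolding GammaT_def by (rule closure_of_minimal[OF _ C(1)])
  then have "x \<in> C \<inter> GammaT A" using x by blast
  then have "x \<in> {x \<in> GammaT A. h x \<in> {0}}" unfolding C(2) .
  then show ?thesis by simp
qed



theorem proposition4p2:
  fixes A :: "'a \<Rightarrow> 'a \<Rightarrow> bool"
  shows "ringR A = (\<lambda>g. g \<circ> emb A) ` C0Z A \<and>
         ringRT A = (\<lambda>g. g \<circ> emb A) ` CZ A"
proof (intro conjI)
  show "ringRT A = (\<lambda>g. g \<circ> emb A) ` CZ A"
  proof
    show "ringRT A \<subseteq> (\<lambda>g. g \<circ> emb A) ` CZ A"
    proof
      fix f assume "f \<in> ringRT A"
      then obtain g where g: "contT A g" "g \<circ> emb A = f" using ringRT_ext by blast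
      have "g \<in> CZ A" using g(1) by (simp add: CZ_def)
      then have "g \<circ> emb A \<in> (\<lambda>g. g \<circ> emb A) ` CZ A" by (rule imageI)
      then show "f \<in> (\<lambda>g. g \<circ> emb A) ` CZ A" by (simp only: g(2))
    qed
    show "(\<lambda>g. g \<circ> emb A) ` CZ A \<subseteq> ringRT A"
      using CZ_sub by blast
  qed
  show "ringR A = (\<lambda>g. g \<circ> emb A) ` C0Z A"
  proof
    show "ringR A \<subseteq> (\<lambda>g. g \<circ> emb A) ` C0Z A"
    proof
      fix f assume "f \<in> ringR A"
      then obtain g where g: "contT A g" "g \<circ> emb A = f" "g star_pt = 0" using ringR_ext by blast
      have "g \<in> C0Z A" by (rule contT_C0Z[OF g(1,3)])
      then have "g \<circ> emb A \<in> (\<lambda>g. g \<circ> emb A) ` C0Z A" by (rule imageI)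
      then show "f \<in> (\<lambda>g. g \<circ> emb A) ` C0Z A" by (simp only: g(2))
    qed
    show "(\<lambda>g. g \<circ> emb A) ` C0Z A \<subseteq> ringR A"
    proof
      fix f assume "f \<in> (\<lambda>g. g \<circ> emb A) ` C0Z A"
      then obtain g where g: "g \<in> C0Z A" and f: "f = g \<circ> emb A" by blast
      define g' where "g' = (\<lambda>x. if x = star_pt then 0 else g x)"
      have g'CZ: "g' \<in> CZ A" unfolding g'_def by (rule C0Z_ext[OF g])
      have embne: "emb A j \<noteq> star_pt" for j by (simp add: emb_def star_pt_def)
      have fg': "f = g' \<circ> emb A" unfolding f g'_def using embne by (simp add: fun_eq_iff)
      have "f \<in> ringRT A" unfolding fg' by (rule CZ_sub[OF g'CZ])
      then obtain n r where nr: "r \<in> ringR A" "f = (\<lambda>x. n + r x)" using decomp by blast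
      show "f \<in> ringR A"
      proof (cases "star_pt \<in> GammaT A")
        case False
        have "(\<lambda>x. of_int n * (\<lambda>_. 1) x) \<in> ringR A" by (rule R_smult[OF one_R[OF False]])
        from R_add[OF this nr(1)] show ?thesis unfolding nr(2) by simp
      next
        case True
        obtain gr where gr: "contT A gr" "gr \<circ> emb A = r" "gr star_pt = 0" using ringR_ext[OF nr(1)] by blast
        define h where "h = (\<lambda>x. g' x + (- (n + gr x)))"
        have g'c: "contT A g'" using g'CZ by (simp add: CZ_def)
        have hc: "contT A h" unfolding h_def
          by (intro cont_add g'c cont_neg cont_const gr(1))
        have hz: "h (emb A j) = 0" for j
        proof -
          have "g' (emb A j) = n + r j" using fg' nr(2) by (metis comp_apply)
          moreover have "gr (emb A j) = r j" using gr(2) by (metis comp_apply)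
          ultimately show ?thesis by (simp add: h_def)
        qed
        have "h star_pt = 0" by (rule density[OF hc hz True])
        then have "n = 0" by (simp add: h_def g'_def gr(3))
        then have "f = r" using nr(2) by simp
        then show ?thesis using nr(1) by simp
      qed
    qed
  qed
qed


end
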